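(* Let $m,k$ be positive integers and $p$ a prime with $(m,k-1)=1$ and $p=\mathrm{ind}_m(k)$; let $G=G(m,p,k)=\langle a,b;\ a^m=1,\ b^p=1,\ b^{-1}ab=a^k\rangle$, $R=\{k^j-1 \bmod m: j\in\mathbb{Z}_p\}$ and $L=\{1-k^j \bmod m: j\in\mathbb{Z}_p\}$. Then every nonzero element of $R^*$ and every nonzero element of $L^*$ is invertible in $\mathbb{Z}_m$, and both $\mathrm{P}(G)$ and $\Lambda(G)$ are complete (i.e. $\Sigma_G(R)$ and $\Sigma_G(L)$ are complete).
   Context: $\mathrm{ind}_m(k)$ is the least positive integer $d$ with $k^d\equiv 1\pmod m$. $S^*$ denotes the multiplicative subsemigroup of $\mathbb{Z}_m$ generated by $S$. Elements of $G$ are written uniquely as $a^ib^j$; $k_t=k^t-1\pmod m$. Commutators are $[x,y]=x^{-1}y^{-1}xy$; $(x)\rho(g)=[x,g]$, $(x)\lambda(g)=[g,x]$; maps are written on the right and composed left to right. $\mathrm{P}(G)$, $\Lambda(G)$ are the semigroups generated by all $\rho(g)$, resp. all $\lambda(g)$; they equal $\Sigma_G(R)$, $\Sigma_G(L)$. For $x,y\in\mathbb{Z}_m$, $(a^ib^j)\mu(x,y)=a^{xik^j-yk_j}$, $C(x,y)=\{\mu(x,yz):z\in\mathbb{Z}_m\}$. For $S\subseteq\mathbb{Z}_m$, $I(S)$ is the set of invertible elements of $S$; a base is $S$ with $0\in S$, $I(S)\neq\varnothing$; $\Sigma_G(S)$ is the semigroup generated by $\{\mu(s,z):s\in S,z\in\mathbb{Z}_m\}$.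 For $x\in S^*$, $Y(x)=\{s^*z: s^*\in S^*, z\in\mathbb{Z}_m, \exists s\in S,\ x\equiv ss^*\}$; the $x$-family $\{C(x,y):y\in Y(x)\}$ is complete if it contains $C(x,1)$, and $\Sigma_G(S)$ is complete if all $x$-families ($x\in S^*$) are complete. *)

theory Defs
  imports "HOL-Number_Theory.Number_Theory" "HOL-Library.FuncSet"
begin

text \<open>Elements a^i b^j of G(m,p,k) are represented by their normal-form exponent pairs (i,j),
  with i in Z_m = {0..<m} and j in Z_p = {0..<p}. Residues of Z_m are represented by integers in {0..<m}.\<close>

definition Gcar :: "nat \<Rightarrow> nat \<Rightarrow> (int \<times> int) set" where
  "Gcar m p = {0..<int m} \<times> {0..<int p}"

text \<open>(a^i b^j) mu(x,y) = a^(x i k^j - y k_j), with k_j = k^j - 1 mod m; the value is the exponent of a in Z_m.\<close>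
definition mu :: "nat \<Rightarrow> nat \<Rightarrow> nat \<Rightarrow> int \<Rightarrow> int \<Rightarrow> (int \<times> int \<Rightarrow> int)" where
  "mu m p k x y = restrict (\<lambda>(i, j). (x * i * int k ^ nat j - y * ((int k ^ nat j - 1) mod int m)) mod int m) (Gcar m p)"

definition Cset :: "nat \<Rightarrow> nat \<Rightarrow> nat \<Rightarrow> int \<Rightarrow> int \<Rightarrow> (int \<times> int \<Rightarrow> int) set" where
  "Cset m p k x y = {mu m p k x ((y * z) mod int m) | z. z \<in> {0..<int m}}"

inductive_set sgen :: "nat \<Rightarrow> int set \<Rightarrow> int set" for m :: nat and S :: "int set" where
  base: "s \<in> S \<Longrightarrow> s \<in> sgen m S"
| mult: "a \<in> sgen m S \<Longrightarrow> b \<in> sgen m S \<Longrightarrow> (a * b) mod int m \<in> sgen m S"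

definition Yset :: "nat \<Rightarrow> int set \<Rightarrow> int \<Rightarrow> int set" where
  "Yset m S x = {(t * z) mod int m | t z. t \<in> sgen m S \<and> z \<in> {0..<int m}
                   \<and> (\<exists>s\<in>S. [x = s * t] (mod int m))}"

definition family_complete :: "nat \<Rightarrow> nat \<Rightarrow> nat \<Rightarrow> int set \<Rightarrow> int \<Rightarrow> bool" where
  "family_complete m p k S x = (Cset m p k x 1 \<in> {Cset m p k x y | y. y \<in> Yset m S x})"

definition Sigma_complete :: "nat \<Rightarrow> nat \<Rightarrow> nat \<Rightarrow> int set \<Rightarrow> bool" where
  "Sigma_complete m p k S = (\<forall>x \<in> sgen m S. family_complete m p k S x)"

definition Rset :: "nat \<Rightarrow> nat \<Rightarrow> nat \<Rightarrow> int set" where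
  "Rset m p k = {(int k ^ j - 1) mod int m | j. j < p}"

definition Lset :: "nat \<Rightarrow> nat \<Rightarrow> nat \<Rightarrow> int set" where
  "Lset m p k = {(1 - int k ^ j) mod int m | j. j < p}"

definition invertible_mod :: "nat \<Rightarrow> int \<Rightarrow> bool" where
  "invertible_mod m x = (\<exists>y. [x * y = 1] (mod int m))"

end

theory Submission imports Defs begin

lemma key_nat:
  fixes m k p j :: nat
  assumes "prime p" "coprime m (k - 1)" "p = ord m k" "0 < j" "j < p" "k > 0"
  shows "coprime (k ^ j - 1) m"
proof -
  define g where "g = gcd (k ^ j - 1) m"
  have kj: "1 \<le> k ^ j" using assms(6) by simp
  have "g dvd k ^ j - 1" by (simp add: g_def)
  hence c1: "[k ^ j = 1] (mod g)" using cong_altdef_nat[OF kj, of g] by simp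
  have "[k ^ p = 1] (mod m)" unfolding assms(3) by (rule ord)
  moreover have "g dvd m" by (simp add: g_def)
  ultimately have c2: "[k ^ p = 1] (mod g)" using cong_dvd_modulus_nat by blast
  have d1: "ord g k dvd j" using c1 ord_divides by blast
  have d2: "ord g k dvd p" using c2 ord_divides by blast
  have "ord g k = 1 \<or> ord g k = p" using d2 assms(1) by (simp add: prime_nat_iff)
  moreover have "ord g k \<noteq> p"
  proof
    assume "ord g k = p"
    hence "p dvd j" using d1 by simp
    hence "p \<le> j" using assms(4) by (simp add: dvd_imp_le)
    thus False using assms(5) by simp
  qed
  ultimately have "ord g k = 1" by blast
  hence "[k = 1] (mod g)" using ord_eq_Suc_0_iff by simp
  moreover have "[k = 1] (mod g) \<longleftrightarrow> g dvd k - 1"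
    by (rule cong_altdef_nat) (use assms(6) in simp)
  ultimately have "g dvd k - 1" by blast
  moreover have "g dvd m" by (simp add: g_def)
  ultimately have "g = 1" using assms(2) coprime_common_divisor_nat by blast
  thus ?thesis unfolding coprime_iff_gcd_eq_1 g_def .
qed

lemma key_int:
  fixes m k p j :: nat
  assumes "prime p" "coprime m (k - 1)" "p = ord m k" "0 < j" "j < p" "k > 0" "m > 0"
  shows "coprime ((int k ^ j - 1) mod int m) (int m)"
proof -
  have "coprime (k ^ j - 1) m" using key_nat assms by blast
  moreover have eq: "int (k ^ j - 1) = int k ^ j - 1" using assms(6) by (simp add: of_nat_diff)
  ultimately have "coprime (int k ^ j - 1) (int m)" unfolding eq[symmetric] by simp
  thus ?thesis using assms(7) by simp
qed

definition good :: "nat \<Rightarrow> int set \<Rightarrow> bool" where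
  "good m S = (\<forall>s\<in>S. 0 \<le> s \<and> s < int m \<and> (s = 0 \<or> coprime s (int m)))"

lemma sgen_good:
  assumes "good m S" "m > 0" "x \<in> sgen m S"
  shows "0 \<le> x \<and> x < int m \<and> (x = 0 \<or> coprime x (int m))"
  using assms(3)
proof induction
  case (base s) then show ?case using assms(1) good_def by blast
next
  case (mult a b)
  have r: "0 \<le> (a * b) mod int m \<and> (a * b) mod int m < int m" using assms(2) by simp
  show ?case
  proof (cases "a = 0 \<or> b = 0")
    case True then show ?thesis using r by auto
  next
    case False
    hence "coprime (a*b) (int m)" using mult by auto
    hence "coprime ((a*b) mod int m) (int m)" using assms(2) by simp
    then show ?thesis using r by blast
  qed
qed

lemma sgen_pow:
  assumes "u \<in> S" "u mod int m = u"
  shows "(u ^ Suc n) mod int m \<in> sgen m S"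
proof (induction n)
  case 0
  have "u \<in> sgen m S" using assms sgen.base by blast
  then show ?case using assms(2) by simp
next
  case (Suc n)
  have "u \<in> sgen m S" using assms sgen.base by blast
  hence "((u ^ Suc n) mod int m * u) mod int m \<in> sgen m S" using Suc sgen.mult by blast
  moreover have "((u ^ Suc n) mod int m * u) mod int m = (u ^ Suc (Suc n)) mod int m"
    by (metis mod_mult_left_eq power_Suc2)
  ultimately show ?case by simp
qed

lemma one_sgen:
  assumes "u \<in> S" "coprime u (int m)" "u \<ge> 0" "m > 1" "u < int m"
  shows "1 \<in> sgen m S"
proof -
  have "coprime (nat u) m" using assms(2,3)
    by (metis coprime_int_iff int_nat_eq)
  hence "[nat u ^ totient m = 1] (mod m)" using euler_theorem[of "nat u" m] by (simp add: coprime_commute)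
  hence "[int (nat u ^ totient m) = int 1] (mod int m)" using cong_int_iff by blast
  hence c: "[u ^ totient m = 1] (mod int m)" using assms(3) by simp
  have "totient m > 0" using assms(4) by simp
  then obtain n where n: "totient m = Suc n" using gr0_implies_Suc by blast
  have "u mod int m = u" using assms(3,5) by simp
  hence "(u ^ Suc n) mod int m \<in> sgen m S" using sgen_pow assms(1) by blast
  moreover have "(u ^ Suc n) mod int m = 1" using c n assms(4) unfolding cong_def by simp
  ultimately show ?thesis by simp
qed

lemma sgen_factor:
  assumes "x \<in> sgen m S"
  shows "x \<in> S \<or> (\<exists>s\<in>S. \<exists>t\<in>sgen m S. x = (s * t) mod int m)"
  using assms
proof induction
  case (base s) then show ?case by blast
next
  case (mult a b)
  show ?case
  proof (cases "a \<in> S")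
    case True then show ?thesis using mult by blast
  next
    case False
    then obtain s t where st: "s \<in> S" "t \<in> sgen m S" "a = (s * t) mod int m" using mult by blast
    have "(t * b) mod int m \<in> sgen m S" using st(2) mult sgen.mult by blast
    moreover have "(a * b) mod int m = (s * ((t * b) mod int m)) mod int m"
      using st(3) by (simp add: mod_mult_left_eq mod_mult_right_eq mult.assoc)
    ultimately show ?thesis using st(1) by blast
  qed
qed

lemma fc:
  assumes "m > 1" "s \<in> S" "t \<in> sgen m S" "coprime t (int m)" "[x = s * t] (mod int m)"
  shows "family_complete m p k S x"
proof -
  define z where "z = modular_inverse (int m) t"
  have z: "z \<in> {0..<int m}" using assms(1) z_def
    by (simp add: modular_inverse_int_nonneg modular_inverse_int_less)
  have "[t * z = 1] (mod int m)" using cong_modular_inverse1 assms(4) z_def by blast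
  hence "(t * z) mod int m = 1" using assms(1) unfolding cong_def by simp
  moreover have "\<exists>s\<in>S. [x = s * t] (mod int m)" using assms(2,5) by blast
  ultimately have "1 \<in> Yset m S x" unfolding Yset_def using z assms(3)
    by (intro CollectI exI[of _ t] exI[of _ z] conjI) simp_all
  thus ?thesis unfolding family_complete_def by (intro CollectI exI[of _ 1] conjI refl)
qed

lemma generic:
  assumes "good m S" "m > 1" "0 \<in> S" "u \<in> S" "u \<noteq> 0"
  shows "(\<forall>x \<in> sgen m S. x \<noteq> 0 \<longrightarrow> invertible_mod m x) \<and> Sigma_complete m p k S"
proof -
  have m0: "m > 0" using assms(2) by simp
  have "coprime u (int m) \<and> u \<ge> 0 \<and> u < int m" using assms(1,4,5) good_def by blast
  hence one: "1 \<in> sgen m S" using one_sgen assms by blast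
  have c1: "coprime (1::int) (int m)" by simp
  have inv: "\<forall>x \<in> sgen m S. x \<noteq> 0 \<longrightarrow> invertible_mod m x"
  proof (intro ballI impI)
    fix x assume "x \<in> sgen m S" "x \<noteq> 0"
    hence "coprime x (int m)" using sgen_good assms(1) m0 by blast
    thus "invertible_mod m x" unfolding invertible_mod_def using cong_modular_inverse1 by blast
  qed
  have "family_complete m p k S x" if x: "x \<in> sgen m S" for x
  proof (cases "x = 0")
    case True
    show ?thesis by (rule fc[OF assms(2) assms(3) one c1]) (simp add: True)
  next
    case False
    from sgen_factor[OF x] show ?thesis
    proof
      assume "x \<in> S"
      show ?thesis by (rule fc[OF assms(2) \<open>x \<in> S\<close> one c1]) simp
    next
      assume "\<exists>s\<in>S. \<exists>t\<in>sgen m S. x = (s * t) mod int m"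
      then obtain s t where st: "s \<in> S" "t \<in> sgen m S" "x = (s * t) mod int m" by blast
      have "t \<noteq> 0" using st(3) False by auto
      hence "coprime t (int m)" using sgen_good assms(1) m0 st(2) by blast
      moreover have "[x = s * t] (mod int m)" using st(3) unfolding cong_def by simp
      ultimately show ?thesis using fc[OF assms(2) st(1,2)] by blast
    qed
  qed
  thus ?thesis using inv unfolding Sigma_complete_def by blast
qed

theorem theorem6p5:
  fixes m k p :: nat
  assumes "m > 0" and "k > 0" and "prime p"
    and "coprime m (k - 1)" and "p = ord m k"
  shows "(\<forall>x \<in> sgen m (Rset m p k). x \<noteq> 0 \<longrightarrow> invertible_mod m x)
       \<and> (\<forall>x \<in> sgen m (Lset m p k). x \<noteq> 0 \<longrightarrow> invertible_mod m x)
       \<and> Sigma_complete m p k (Rset m p k)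
       \<and> Sigma_complete m p k (Lset m p k)"
proof -
  have p2: "p \<ge> 2" using assms(3) prime_ge_2_nat by blast
  have m1: "m > 1"
  proof (rule ccontr)
    assume "\<not> m > 1"
    hence "m = 1" using assms(1) by simp
    hence "p = 1" using assms(5) by simp
    thus False using p2 by simp
  qed
  have cop: "coprime (int k ^ j - 1) (int m)" if "0 < j" "j < p" for j
  proof -
    have "coprime (k ^ j - 1) m" using key_nat assms that by blast
    moreover have eq: "int (k ^ j - 1) = int k ^ j - 1" using assms(2) by (simp add: of_nat_diff)
    ultimately show ?thesis unfolding eq[symmetric] by simp
  qed
  have gR: "good m (Rset m p k)" unfolding good_def Rset_def
  proof (intro ballI)
    fix s assume "s \<in> {(int k ^ j - 1) mod int m |j. j < p}"
    then obtain j where j: "j < p" "s = (int k ^ j - 1) mod int m" by blast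
    show "0 \<le> s \<and> s < int m \<and> (s = 0 \<or> coprime s (int m))"
    proof (cases "j = 0")
      case True then show ?thesis using j assms(1) by simp
    next
      case False
      hence "coprime s (int m)" using cop j assms(1) by simp
      then show ?thesis using j assms(1) by simp
    qed
  qed
  have gL: "good m (Lset m p k)" unfolding good_def Lset_def
  proof (intro ballI)
    fix s assume "s \<in> {(1 - int k ^ j) mod int m |j. j < p}"
    then obtain j where j: "j < p" "s = (1 - int k ^ j) mod int m" by blast
    show "0 \<le> s \<and> s < int m \<and> (s = 0 \<or> coprime s (int m))"
    proof (cases "j = 0")
      case True then show ?thesis using j assms(1) by simp
    next
      case False
      hence "coprime (int k ^ j - 1) (int m)" using cop j by simp
      hence "coprime (1 - int k ^ j) (int m)" by (metis coprime_minus_left_iff minus_diff_eq)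
      hence "coprime s (int m)" using j assms(1) by simp
      then show ?thesis using j assms(1) by simp
    qed
  qed
  have c1: "coprime (int k ^ 1 - 1) (int m)" using cop[of 1] p2 by simp
  have u0: "(int k - 1) mod int m \<noteq> 0"
  proof
    assume "(int k - 1) mod int m = 0"
    hence "coprime 0 (int m)" using c1 m1 by (metis coprime_mod_left_iff of_nat_0_less_iff power_one_right less_imp_neq assms(1) not_gr0)
    thus False using m1 by simp
  qed
  have v0: "(1 - int k) mod int m \<noteq> 0"
  proof
    assume "(1 - int k) mod int m = 0"
    hence "int m dvd (1 - int k)" by presburger
    hence "int m dvd (int k - 1)" by (metis dvd_minus_iff minus_diff_eq)
    hence "(int k - 1) mod int m = 0" by presburger
    thus False using u0 by simp
  qed
  have R: "(\<forall>x \<in> sgen m (Rset m p k). x \<noteq> 0 \<longrightarrow> invertible_mod m x) \<and> Sigma_complete m p k (Rset m p k)"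
  proof (rule generic[OF gR m1])
    show "0 \<in> Rset m p k" unfolding Rset_def using p2 by (intro CollectI exI[of _ 0]) simp
    show "(int k - 1) mod int m \<in> Rset m p k" unfolding Rset_def using p2 by (intro CollectI exI[of _ 1]) simp
    show "(int k - 1) mod int m \<noteq> 0" by (rule u0)
  qed
  have L: "(\<forall>x \<in> sgen m (Lset m p k). x \<noteq> 0 \<longrightarrow> invertible_mod m x) \<and> Sigma_complete m p k (Lset m p k)"
  proof (rule generic[OF gL m1])
    show "0 \<in> Lset m p k" unfolding Lset_def using p2 by (intro CollectI exI[of _ 0]) simp
    show "(1 - int k) mod int m \<in> Lset m p k" unfolding Lset_def using p2 by (intro CollectI exI[of _ 1]) simp
    show "(1 - int k) mod int m \<noteq> 0" by (rule v0)
  qed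
  show ?thesis using R L by blast
qed

end
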